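(* Let $G$ be a claw-free graph and let $C$, $C_0$ be even holes of $G$. If $C$ is compatible with $C_0$, then $C$ is compatible with every even hole $C'\in\langle C_0\rangle$.
   Context: A hole is an induced cycle of length $\ge4$; even hole: even length. Claw-free: no induced $K_{1,3}$. Two even holes $C,C'$ are compatible iff $G[C\cup C']$ is a disconnected graph whose components are $G[C]$ and $G[C']$ (i.e., they are disjoint and no edge joins them). Single-vertex deformation: if $C$ is an even hole and $\mathbf{j}\notin C$ has $\Gamma_C(\mathbf{j})=\{\mathbf{u},\mathbf{k},\mathbf{v}\}$ with $\mathbf{u},\mathbf{v}$ the two neighbours of $\mathbf{k}$ in $C$, then $(C\setminus\{\mathbf{k}\})\cup\{\mathbf{j}\}$ is a single-vertex deformation of $C$. The deformation closure $\langle C_0\rangle$ is the smallest set of holes containing $C_0$ closed under single-vertex deformations. *)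

theory Defs
  imports Main
begin

definition graph :: "'a set \<Rightarrow> ('a \<Rightarrow> 'a \<Rightarrow> bool) \<Rightarrow> bool" where
  "graph V E \<longleftrightarrow> finite V \<and> (\<forall>x y. E x y \<longrightarrow> x \<in> V \<and> y \<in> V)
     \<and> (\<forall>x y. E x y \<longrightarrow> E y x) \<and> (\<forall>x. \<not> E x x)"

definition nbrs_in :: "('a \<Rightarrow> 'a \<Rightarrow> bool) \<Rightarrow> 'a set \<Rightarrow> 'a \<Rightarrow> 'a set" where
  "nbrs_in E S j = {x \<in> S. E j x}"

definition claw_free :: "'a set \<Rightarrow> ('a \<Rightarrow> 'a \<Rightarrow> bool) \<Rightarrow> bool" where
  "claw_free V E \<longleftrightarrow> \<not> (\<exists>c a b d. c \<in> V \<and> a \<in> V \<and> b \<in> V \<and> d \<in> V \<and>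
      E c a \<and> E c b \<and> E c d \<and> a \<noteq> b \<and> a \<noteq> d \<and> b \<noteq> d \<and>
      \<not> E a b \<and> \<not> E a d \<and> \<not> E b d)"

definition induced_connected :: "('a \<Rightarrow> 'a \<Rightarrow> bool) \<Rightarrow> 'a set \<Rightarrow> bool" where
  "induced_connected E S \<longleftrightarrow>
     (\<forall>x\<in>S. \<forall>y\<in>S. (\<lambda>u v. u \<in> S \<and> v \<in> S \<and> E u v)\<^sup>*\<^sup>* x y)"

text \<open>A hole: vertex set of an induced cycle of length at least 4, i.e. G[C] is a
  connected 2-regular graph on at least 4 vertices.\<close>
definition hole :: "'a set \<Rightarrow> ('a \<Rightarrow> 'a \<Rightarrow> bool) \<Rightarrow> 'a set \<Rightarrow> bool" where
  "hole V E C \<longleftrightarrow> C \<subseteq> V \<and> finite C \<and> card C \<ge> 4 \<and>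
     (\<forall>x\<in>C. card (nbrs_in E C x) = 2) \<and> induced_connected E C"

definition even_hole :: "'a set \<Rightarrow> ('a \<Rightarrow> 'a \<Rightarrow> bool) \<Rightarrow> 'a set \<Rightarrow> bool" where
  "even_hole V E C \<longleftrightarrow> hole V E C \<and> even (card C)"

definition compatible :: "('a \<Rightarrow> 'a \<Rightarrow> bool) \<Rightarrow> 'a set \<Rightarrow> 'a set \<Rightarrow> bool" where
  "compatible E C C' \<longleftrightarrow> C \<inter> C' = {} \<and> (\<forall>x\<in>C. \<forall>y\<in>C'. \<not> E x y)"

definition sv_deformation :: "'a set \<Rightarrow> ('a \<Rightarrow> 'a \<Rightarrow> bool) \<Rightarrow> 'a set \<Rightarrow> 'a set \<Rightarrow> bool" where
  "sv_deformation V E C D \<longleftrightarrow> even_hole V E C \<and>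
     (\<exists>j k u v. j \<in> V \<and> j \<notin> C \<and> k \<in> C \<and> nbrs_in E C k = {u, v} \<and> u \<noteq> v \<and>
        nbrs_in E C j = {u, k, v} \<and> D = (C - {k}) \<union> {j})"

inductive_set deformation_closure :: "'a set \<Rightarrow> ('a \<Rightarrow> 'a \<Rightarrow> bool) \<Rightarrow> 'a set \<Rightarrow> 'a set set"
  for V E C0 where
  base: "C0 \<in> deformation_closure V E C0"
| step: "C \<in> deformation_closure V E C0 \<Longrightarrow> sv_deformation V E C D \<Longrightarrow> hole V E D \<Longrightarrow>
          D \<in> deformation_closure V E C0"

end

theory Submission
  imports Defs
begin

lemma hole_no_triangle:
  assumes h: "hole V E D" and k: "k \<in> D" and nk: "nbrs_in E D k = {u, v}" and uv: "u \<noteq> v"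
    and sym: "\<And>x y. E x y \<Longrightarrow> E y x" and irr: "\<And>x. \<not> E x x"
  shows "\<not> E u v"
proof
  assume e: "E u v"
  have fin: "finite D" and c4: "card D \<ge> 4" and deg: "\<forall>x\<in>D. card (nbrs_in E D x) = 2"
    and con: "induced_connected E D" using h unfolding hole_def by auto
  have uD: "u \<in> D" "E k u" and vD: "v \<in> D" "E k v" using nk unfolding nbrs_in_def by blast+
  have nu: "nbrs_in E D u = {k, v}"
  proof -
    have sub: "{k, v} \<subseteq> nbrs_in E D u" using uD vD k e sym unfolding nbrs_in_def by auto
    have kv: "k \<noteq> v" using vD irr by metis
    have "finite (nbrs_in E D u)" using fin unfolding nbrs_in_def by auto
    moreover have "card (nbrs_in E D u) = 2" using deg uD by auto
    moreover have "card {k, v} = 2" using kv by auto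
    ultimately show ?thesis using sub by (metis card_subset_eq)
  qed
  have nv: "nbrs_in E D v = {k, u}"
  proof -
    have sub: "{k, u} \<subseteq> nbrs_in E D v" using uD vD k e sym unfolding nbrs_in_def by auto
    have "k \<noteq> u" using uD irr by metis
    hence ku: "card {k, u} = 2" by auto
    have "finite (nbrs_in E D v)" using fin unfolding nbrs_in_def by auto
    moreover have "card (nbrs_in E D v) = 2" using deg vD by auto
    ultimately show ?thesis using sub ku by (metis card_subset_eq)
  qed
  have reach: "y \<in> {u, v, k}" if r: "(\<lambda>a b. a \<in> D \<and> b \<in> D \<and> E a b)\<^sup>*\<^sup>* k y" for y
    using r
  proof (induction rule: rtranclp_induct)
    case base then show ?case by simp
  next
    case (step y z)
    then have "z \<in> nbrs_in E D y" unfolding nbrs_in_def by auto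
    then show ?case using step nk nu nv by auto
  qed
  have "D \<subseteq> {u, v, k}" using con k reach unfolding induced_connected_def by blast
  hence "card D \<le> card {u, v, k}" by (simp add: card_mono)
  also have "\<dots> \<le> 3" by (simp add: card_insert_if)
  finally show False using c4 by simp
qed

lemma step_compat:
  assumes g: "graph V E" and cf: "claw_free V E" and hC: "even_hole V E C"
    and comp: "compatible E C C'" and sv: "sv_deformation V E C' D"
  shows "compatible E C D"
proof -
  obtain j k u v where j: "j \<in> V" "j \<notin> C'" and k: "k \<in> C'" and nk: "nbrs_in E C' k = {u, v}"
    and uv: "u \<noteq> v" and nj: "nbrs_in E C' j = {u, k, v}" and D: "D = (C' - {k}) \<union> {j}"
    and hC': "even_hole V E C'"
    using sv unfolding sv_deformation_def by blast
  have sym: "\<And>x y. E x y \<Longrightarrow> E y x" using g unfolding graph_def by blast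
  have hole': "hole V E C'" using hC' unfolding even_hole_def by auto
  have nuv: "\<not> E u v" using hole_no_triangle[OF hole' k nk uv] sym g unfolding graph_def by blast
  have uC': "u \<in> C'" "v \<in> C'" using nk unfolding nbrs_in_def by auto
  have ju: "E j u" "E j v" using nj unfolding nbrs_in_def by auto
  have CV: "C \<subseteq> V" using hC unfolding even_hole_def hole_def by auto
  have C'V: "C' \<subseteq> V" using hole' unfolding hole_def by auto
  have jC: "j \<notin> C" using comp ju uC' unfolding compatible_def by blast
  have noE: "\<not> E j x" if x: "x \<in> C" for x
  proof
    assume ejx: "E j x"
    have "x \<noteq> u" "x \<noteq> v" using comp x uC' unfolding compatible_def by auto
    moreover have "\<not> E x u" "\<not> E x v" using comp x uC' unfolding compatible_def by auto
    moreover have "\<not> E u x" "\<not> E v x" using calculation sym by blast+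
    moreover have "x \<in> V" "u \<in> V" "v \<in> V" using x CV C'V uC' by auto
    ultimately have "j \<in> V \<and> x \<in> V \<and> u \<in> V \<and> v \<in> V \<and>
      E j x \<and> E j u \<and> E j v \<and> x \<noteq> u \<and> x \<noteq> v \<and> u \<noteq> v \<and>
      \<not> E x u \<and> \<not> E x v \<and> \<not> E u v" using j ju ejx nuv uv by blast
    then show False using cf unfolding claw_free_def by blast
  qed
  show ?thesis unfolding compatible_def D
  proof (intro conjI ballI)
    show "C \<inter> (C' - {k} \<union> {j}) = {}" using comp jC unfolding compatible_def by auto
  next
    fix x y assume x: "x \<in> C" and y: "y \<in> C' - {k} \<union> {j}"
    show "\<not> E x y"
    proof (cases "y = j")
      case True then show ?thesis using noE[OF x] sym by blast
    next
      case False then show ?thesis using comp x y unfolding compatible_def by auto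
    qed
  qed
qed

theorem corollary5:
  fixes V :: "'a set" and E :: "'a \<Rightarrow> 'a \<Rightarrow> bool" and C C0 :: "'a set"
  assumes "graph V E"
    and "claw_free V E"
    and "even_hole V E C"
    and "even_hole V E C0"
    and "compatible E C C0"
  shows "\<forall>C' \<in> deformation_closure V E C0. even_hole V E C' \<longrightarrow> compatible E C C'"
proof (intro ballI impI)
  fix C' assume "C' \<in> deformation_closure V E C0"
  then show "compatible E C C'"
  proof (induction rule: deformation_closure.induct)
    case base then show ?case using assms(5) .
  next
    case (step C1 D) then show ?case using step_compat assms(1,2,3) by blast
  qed
qed

end
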